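(* Let $p$ be a prime, let $V:=\{v_F: F\subseteq[4p],\ |F|=2p\}\subseteq\{0,1\}^{4p}\subseteq\mathbb{F}_p^{4p}$, let $C\subseteq[4p]$ with $|C|=3p$, and put $Q:=V\cup\{v_C\}$. If $y\in\mathrm{Sm}(\prec_{deg},Q)\setminus\mathrm{Sm}(\prec_{deg},V)$, then $\deg y\ge p$.
   Context: $[m]=\{1,\dots,m\}$; $v_F\in\{0,1\}^{4p}$ is the characteristic vector of $F$. Polynomials are in $\mathbb{F}_p[x_1,\ldots,x_{4p}]$. $\prec_{deg}$ is the deglex order (compare degrees first, ties broken lexicographically with $x_{4p}\prec\cdots\prec x_1$). $\mathrm{Sm}(\prec,X)$ is the set of monomials that are not the $\prec$-leading monomial of any nonzero polynomial over $\mathbb{F}_p$ vanishing on $X$. *)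

theory Defs
  imports Main "HOL-Library.Poly_Mapping" "HOL-Computational_Algebra.Primes"
begin

text \<open>Monomials in variables x_1..x_n are exponent vectors finitely supported maps nat to nat with support in {1..n};
  polynomials are finitely supported maps from monomials to coefficients.\<close>

type_synonym monom = "nat \<Rightarrow>\<^sub>0 nat"
type_synonym 'a mpoly = "monom \<Rightarrow>\<^sub>0 'a"

definition mdeg :: "monom \<Rightarrow> nat" where
  "mdeg m = (\<Sum>i\<in>Poly_Mapping.keys m. Poly_Mapping.lookup m i)"

text \<open>deglex: degree first, ties lexicographically with x_n < ... < x_1,
  i.e. compare exponents of x_1, x_2, ... in turn.\<close>
definition deglex_less :: "monom \<Rightarrow> monom \<Rightarrow> bool" where
  "deglex_less m m' \<longleftrightarrow> mdeg m < mdeg m' \<or>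
     (mdeg m = mdeg m' \<and> (\<exists>i. Poly_Mapping.lookup m i < Poly_Mapping.lookup m' i \<and> (\<forall>j<i. Poly_Mapping.lookup m j = Poly_Mapping.lookup m' j)))"

definition is_monom_in :: "nat \<Rightarrow> monom \<Rightarrow> bool" where
  "is_monom_in n m \<longleftrightarrow> Poly_Mapping.keys m \<subseteq> {1..n}"

definition is_poly_in :: "nat \<Rightarrow> 'a::zero mpoly \<Rightarrow> bool" where
  "is_poly_in n P \<longleftrightarrow> (\<forall>m\<in>Poly_Mapping.keys P. is_monom_in n m)"

definition meval :: "'a::comm_semiring_1 mpoly \<Rightarrow> (nat \<Rightarrow> 'a) \<Rightarrow> 'a" where
  "meval P x = (\<Sum>m\<in>Poly_Mapping.keys P. Poly_Mapping.lookup P m * (\<Prod>i\<in>Poly_Mapping.keys m. x i ^ Poly_Mapping.lookup m i))"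

definition leading_monom :: "'a::zero mpoly \<Rightarrow> monom \<Rightarrow> bool" where
  "leading_monom P m \<longleftrightarrow> m \<in> Poly_Mapping.keys P \<and> (\<forall>m'\<in>Poly_Mapping.keys P. m' \<noteq> m \<longrightarrow> deglex_less m' m)"

definition Sm :: "nat \<Rightarrow> (nat \<Rightarrow> 'a::comm_semiring_1) set \<Rightarrow> monom set" where
  "Sm n X = {m. is_monom_in n m \<and>
     \<not> (\<exists>P::'a mpoly. P \<noteq> 0 \<and> is_poly_in n P \<and> (\<forall>x\<in>X. meval P x = 0) \<and> leading_monom P m)}"

definition charvec :: "nat set \<Rightarrow> nat \<Rightarrow> 'a::zero_neq_one" where
  "charvec F i = (if i \<in> F then 1 else 0)"

end

theory Submission
  imports Defs "HOL-Number_Theory.Residues"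
begin

lemma char_eq_p:
  assumes "prime p" and "card (UNIV :: 'k::{field,finite} set) = p"
  shows "CHAR('k) = p"
proof -
  have "CHAR('k) > 0" by (rule finite_imp_CHAR_pos) simp
  then have "prime CHAR('k)" by (rule prime_CHAR_semidom)
  moreover have "CHAR('k) dvd p" using CHAR_dvd_CARD[where 'a='k] assms(2) by simp
  ultimately show ?thesis using assms(1) primes_dvd_imp_eq by blast
qed

lemma binom_one:
  assumes "CHAR('k::field) = p" and "prime p"
  shows "r < p \<Longrightarrow> (of_nat ((p + r) choose r) :: 'k) = 1"
proof (induction r)
  case 0 then show ?case by simp
next
  case (Suc r)
  have IH: "(of_nat ((p + r) choose r) :: 'k) = 1" using Suc by simp
  have e: "Suc r * (Suc (p + r) choose Suc r) = Suc (p+r) * ((p + r) choose r)"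
    by (rule Suc_times_binomial)
  have "(of_nat (Suc r) :: 'k) * of_nat (Suc (p + r) choose Suc r) = of_nat (Suc (p+r)) * of_nat ((p + r) choose r)"
    by (metis e of_nat_mult)
  also have "(of_nat (Suc (p+r)) :: 'k) = of_nat p + of_nat (Suc r)" by simp
  also have "(of_nat p :: 'k) = 0" using assms(1) by (metis of_nat_CHAR)
  finally have h: "(of_nat (Suc r) :: 'k) * of_nat (Suc (p + r) choose Suc r) = of_nat (Suc r)"
    using IH by simp
  have nz: "(of_nat (Suc r) :: 'k) \<noteq> 0"
    using Suc.prems assms(1) of_nat_eq_0_iff_char_dvd[where 'a='k]
    by (metis nat_dvd_not_less zero_less_Suc)
  have "p + Suc r = Suc (p + r)" by simp
  then show ?case using h nz by (metis mult_cancel_left1)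
qed

lemma eval01:
  fixes P :: "'k::comm_semiring_1 mpoly"
  shows "meval P (charvec G) = (\<Sum>m\<in>Poly_Mapping.keys P. Poly_Mapping.lookup P m * (if Poly_Mapping.keys m \<subseteq> G then 1 else 0))"
  unfolding meval_def
proof (rule sum.cong[OF refl])
  fix m
  have "(\<Prod>i\<in>Poly_Mapping.keys m. (charvec G i :: 'k) ^ Poly_Mapping.lookup m i) = (if Poly_Mapping.keys m \<subseteq> G then 1 else 0)"
  proof (cases "Poly_Mapping.keys m \<subseteq> G")
    case True
    then show ?thesis by (auto simp: charvec_def intro!: prod.neutral)
  next
    case False
    then obtain i where i: "i \<in> Poly_Mapping.keys m" "i \<notin> G" by auto
    then have "(charvec G i :: 'k) ^ Poly_Mapping.lookup m i = 0"
      by (cases "Poly_Mapping.lookup m i") (auto simp: charvec_def in_keys_iff)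
    then show ?thesis using False i by (auto intro: prod_zero)
  qed
  then show "Poly_Mapping.lookup P m * (\<Prod>i\<in>Poly_Mapping.keys m. charvec G i ^ Poly_Mapping.lookup m i) =
         Poly_Mapping.lookup P m * (if Poly_Mapping.keys m \<subseteq> G then 1 else 0)" by simp
qed

lemma card_keys_le: "card (Poly_Mapping.keys m) \<le> mdeg m"
proof -
  have "card (Poly_Mapping.keys m) = (\<Sum>i\<in>Poly_Mapping.keys m. 1)" by simp
  also have "\<dots> \<le> (\<Sum>i\<in>Poly_Mapping.keys m. Poly_Mapping.lookup m i)"
    by (rule sum_mono) (simp add: in_keys_iff Suc_le_eq)
  finally show ?thesis by (simp add: mdeg_def)
qed

lemma count_subsets:
  assumes "finite E" "T \<subseteq> E" "card T \<le> k"
  shows "card {B. B \<subseteq> E \<and> card B = k \<and> T \<subseteq> B} = (card E - card T) choose (k - card T)"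
proof -
  have fT: "finite T" using assms finite_subset by blast
  have "bij_betw (\<lambda>B. B - T) {B. B \<subseteq> E \<and> card B = k \<and> T \<subseteq> B} {B. B \<subseteq> E - T \<and> card B = k - card T}"
  proof (rule bij_betw_byWitness[where f'="\<lambda>B. B \<union> T"])
    show "\<forall>a\<in>{B. B \<subseteq> E \<and> card B = k \<and> T \<subseteq> B}. a - T \<union> T = a" by auto
    show "\<forall>a'\<in>{B. B \<subseteq> E - T \<and> card B = k - card T}. a' \<union> T - T = a'" by auto
    show "(\<lambda>B. B - T) ` {B. B \<subseteq> E \<and> card B = k \<and> T \<subseteq> B} \<subseteq> {B. B \<subseteq> E - T \<and> card B = k - card T}"
      using assms(1) by (auto simp: card_Diff_subset finite_subset)
    show "(\<lambda>B. B \<union> T) ` {B. B \<subseteq> E - T \<and> card B = k - card T} \<subseteq> {B. B \<subseteq> E \<and> card B = k \<and> T \<subseteq> B}"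
    proof
      fix X assume "X \<in> (\<lambda>B. B \<union> T) ` {B. B \<subseteq> E - T \<and> card B = k - card T}"
      then obtain B where B: "B \<subseteq> E - T" "card B = k - card T" "X = B \<union> T" by auto
      have "finite B" using B(1) assms(1) finite_subset by blast
      have "B \<inter> T = {}" using B(1) by auto
      then have "card X = card B + card T" using B(3) fT \<open>finite B\<close> by (simp add: card_Un_disjoint)
      then show "X \<in> {B. B \<subseteq> E \<and> card B = k \<and> T \<subseteq> B}" using B assms by auto
    qed
  qed
  then have "card {B. B \<subseteq> E \<and> card B = k \<and> T \<subseteq> B} = card {B. B \<subseteq> E - T \<and> card B = k - card T}"
    by (rule bij_betw_same_card)
  also have "\<dots> = card (E - T) choose (k - card T)" using assms(1) by (simp add: n_subsets)
  finally show ?thesis using assms fT by (simp add: card_Diff_subset)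
qed

lemma count_main:
  fixes A E T :: "nat set"
  assumes "CHAR('k::field) = p" "prime p" "finite E" "card E = 2*p - 1" "A \<inter> E = {}"
    and "finite T" "card T < p"
  shows "(of_nat (card {B. B \<subseteq> E \<and> card B = p - 1 \<and> T \<subseteq> A \<union> B}) :: 'k)
     = (if T \<subseteq> A \<union> E then 1 else 0)"
proof (cases "T \<subseteq> A \<union> E")
  case True
  have eq: "{B. B \<subseteq> E \<and> card B = p - 1 \<and> T \<subseteq> A \<union> B} = {B. B \<subseteq> E \<and> card B = p - 1 \<and> T \<inter> E \<subseteq> B}"
    using True assms(5) by blast
  have ci: "card (T \<inter> E) \<le> card T" using assms(6) by (simp add: card_mono)
  define r where "r = p - 1 - card (T \<inter> E)"
  have p2: "p \<ge> 2" using assms(2) prime_ge_2_nat by blast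
  have "card {B. B \<subseteq> E \<and> card B = p - 1 \<and> T \<inter> E \<subseteq> B} = (card E - card (T \<inter> E)) choose (p - 1 - card (T \<inter> E))"
    by (rule count_subsets) (use assms ci in auto)
  also have "\<dots> = (p + r) choose r"
  proof -
    have "card (T \<inter> E) < p" using ci assms(7) by linarith
    then have "card E - card (T \<inter> E) = p + r" "p - 1 - card (T \<inter> E) = r"
      using assms(4) p2 unfolding r_def by linarith+
    then show ?thesis by simp
  qed
  finally have "card {B. B \<subseteq> E \<and> card B = p - 1 \<and> T \<subseteq> A \<union> B} = (p + r) choose r" using eq by simp
  moreover have "r < p" unfolding r_def using p2 by simp
  ultimately show ?thesis using binom_one[OF assms(1,2)] True by simp
next
  case False
  then have "{B. B \<subseteq> E \<and> card B = p - 1 \<and> T \<subseteq> A \<union> B} = {}" by blast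
  then show ?thesis using False by (simp only: card.empty of_nat_0 if_False)
qed


lemma vanish_C:
  fixes P :: "'k::{field,finite} mpoly"
  assumes "prime p" "card (UNIV :: 'k set) = p" "C \<subseteq> {1..4*p}" "card C = 3*p"
    and van: "\<And>F. F \<subseteq> {1..4*p} \<Longrightarrow> card F = 2*p \<Longrightarrow> meval P (charvec F) = 0"
    and small: "\<And>m. m \<in> Poly_Mapping.keys P \<Longrightarrow> card (Poly_Mapping.keys m) < p"
  shows "meval P (charvec C) = 0"
proof -
  have ch: "CHAR('k) = p" by (rule char_eq_p[OF assms(1,2)])
  have p2: "p \<ge> 2" using assms(1) prime_ge_2_nat by blast
  have fC: "finite C" using assms(3) finite_subset by blast
  obtain A where A: "A \<subseteq> C" "card A = p + 1"
    using obtain_subset_with_card_n[of "p+1" C] assms(4) p2 by auto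
  define E where "E = C - A"
  have fE: "finite E" using fC E_def by simp
  have cE: "card E = 2*p - 1" using A fC assms(4) unfolding E_def
    by (simp add: card_Diff_subset finite_subset)
  have AE: "A \<inter> E = {}" "A \<union> E = C" using A unfolding E_def by auto
  define BB where "BB = {B. B \<subseteq> E \<and> card B = p - 1}"
  have fBB: "finite BB" unfolding BB_def using fE by simp
  have z: "meval P (charvec (A \<union> B)) = 0" if "B \<in> BB" for B
  proof (rule van)
    have "B \<subseteq> E" "card B = p - 1" using that unfolding BB_def by auto
    then have "finite B" using fE finite_subset by blast
    show "A \<union> B \<subseteq> {1..4*p}" using \<open>B \<subseteq> E\<close> A assms(3) unfolding E_def by auto
    have "finite A" using A fC finite_subset by blast
    have "A \<inter> B = {}" using AE \<open>B \<subseteq> E\<close> by auto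
    then show "card (A \<union> B) = 2*p" using \<open>finite A\<close> \<open>finite B\<close> A \<open>card B = p - 1\<close> p2
      by (simp add: card_Un_disjoint)
  qed
  have "0 = (\<Sum>B\<in>BB. meval P (charvec (A \<union> B)))" using z by simp
  also have "\<dots> = (\<Sum>B\<in>BB. \<Sum>m\<in>Poly_Mapping.keys P. Poly_Mapping.lookup P m * (if Poly_Mapping.keys m \<subseteq> A \<union> B then 1 else 0))"
    by (simp add: eval01)
  also have "\<dots> = (\<Sum>m\<in>Poly_Mapping.keys P. \<Sum>B\<in>BB. Poly_Mapping.lookup P m * (if Poly_Mapping.keys m \<subseteq> A \<union> B then 1 else 0))"
    by (rule sum.swap)
  also have "\<dots> = (\<Sum>m\<in>Poly_Mapping.keys P. Poly_Mapping.lookup P m * (if Poly_Mapping.keys m \<subseteq> C then 1 else 0))"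
  proof (rule sum.cong[OF refl])
    fix m assume m: "m \<in> Poly_Mapping.keys P"
    have "(\<Sum>B\<in>BB. Poly_Mapping.lookup P m * (if Poly_Mapping.keys m \<subseteq> A \<union> B then 1 else 0))
       = Poly_Mapping.lookup P m * (\<Sum>B\<in>BB. (if Poly_Mapping.keys m \<subseteq> A \<union> B then 1 else 0))"
      by (simp add: sum_distrib_left)
    also have "(\<Sum>B\<in>BB. (if Poly_Mapping.keys m \<subseteq> A \<union> B then 1 else 0)) = (of_nat (card {B\<in>BB. Poly_Mapping.keys m \<subseteq> A \<union> B}) :: 'k)"
    proof -
      have "BB \<inter> {B. Poly_Mapping.keys m \<subseteq> A \<union> B} = {B\<in>BB. Poly_Mapping.keys m \<subseteq> A \<union> B}" by blast
      then show ?thesis using fBB by (simp add: sum.If_cases)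
    qed
    also have "{B\<in>BB. Poly_Mapping.keys m \<subseteq> A \<union> B} = {B. B \<subseteq> E \<and> card B = p - 1 \<and> Poly_Mapping.keys m \<subseteq> A \<union> B}"
      unfolding BB_def by auto
    also have "(of_nat (card \<dots>) :: 'k) = (if Poly_Mapping.keys m \<subseteq> A \<union> E then 1 else 0)"
      by (rule count_main[OF ch assms(1) fE cE AE(1)]) (use small[OF m] in auto)
    finally show "(\<Sum>B\<in>BB. Poly_Mapping.lookup P m * (if Poly_Mapping.keys m \<subseteq> A \<union> B then 1 else 0))
       = Poly_Mapping.lookup P m * (if Poly_Mapping.keys m \<subseteq> C then 1 else 0)" using AE(2) by simp
  qed
  also have "\<dots> = meval P (charvec C)" by (simp add: eval01)
  finally show ?thesis by simp
qed

theorem mainTheorem11: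
  fixes p :: nat and C :: "nat set" and y :: monom
    and V Q :: "(nat \<Rightarrow> 'k::{field,finite}) set"
  assumes "prime p"
    and "card (UNIV :: 'k set) = p"
    and "C \<subseteq> {1..4*p}" and "card C = 3*p"
    and "V = {charvec F | F. F \<subseteq> {1..4*p} \<and> card F = 2*p}"
    and "Q = V \<union> {charvec C}"
    and "y \<in> Sm (4*p) Q - Sm (4*p) V"
  shows "mdeg y \<ge> p"
proof (rule ccontr)
  assume "\<not> mdeg y \<ge> p"
  then have dy: "mdeg y < p" by simp
  have yQ: "y \<in> Sm (4*p) Q" and yV: "y \<notin> Sm (4*p) V" using assms(7) by auto
  have mi: "is_monom_in (4*p) y" using yQ unfolding Sm_def by auto
  obtain P :: "'k mpoly" where P: "P \<noteq> 0" "is_poly_in (4*p) P" "\<forall>x\<in>V. meval P x = 0" "leading_monom P y"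
    using yV mi unfolding Sm_def by auto
  have small: "card (Poly_Mapping.keys m) < p" if "m \<in> Poly_Mapping.keys P" for m
  proof -
    have "mdeg m \<le> mdeg y" using P(4) that unfolding leading_monom_def deglex_less_def by fastforce
    then show ?thesis using card_keys_le[of m] dy by linarith
  qed
  have van: "meval P (charvec F) = 0" if "F \<subseteq> {1..4*p}" "card F = 2*p" for F
    using P(3) that assms(5) by blast
  have "meval P (charvec C) = 0"
    by (rule vanish_C[OF assms(1-4) van small]) auto
  then have "\<forall>x\<in>Q. meval P x = 0" using P(3) assms(6) by auto
  then show False using yQ P unfolding Sm_def by blast
qed

end
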